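(* Fix a protocol specification $(I,D,C)$ and a setting $(n,r,f)$ with $r\ge 2$, and suppose the setting is feasible, i.e. there exists a correct state machine. Let $\mathit{Sc}$ be a scenario that leads to a definite decision, with definite final-state vector $(d_1,\dots,d_n)\in D^n$. Let $M$ be any state machine whose execution on $\mathit{Sc}$ ends with process $i$ in final state $d_i$ for every $i$, and let $T$ be a set of transitions $(t,i,x)\mapsto y$ that are applied in this execution of $M$ on $\mathit{Sc}$ (meaning: in round $t$, process $i$ has input vector $x$ and $M(t,i,x)=y$), such that for each pair $(t,i)\in\{1,\dots,r\}\times\{1,\dots,n\}$, $T$ contains at most one transition with round $t$ and process ID $i$. Then there exists a correct state machine $M'$ with $M'(t,i,x)=y$ for every transition $(t,i,x)\mapsto y$ in $T$.
   Context: Model. There are $n$ processes with IDs $1,\dots,n$, running for $r$ synchronous rounds, with at most $f$ crash failures. There is a finite set $I$ of initial states, a finite set $D$ of decision states, a finite set $Q$ of non-final (intermediate) states, and a special symbol $L$ ("lost message") not in any of these sets. A state machine is a function $M$ assigning to each round $t\in\{1,\dots,r\}$, process ID $i$, and input vector $x=(x_1,\dots,x_n)\in (I\cup Q\cup\{L\})^n$ a new state $M(t,i,x)$, which lies in $Q$ if $t<r$ and in $D$ if $t=r$. Scenarios. A scenario is a pair $\mathit{Sc}=(\mathit{Init},\mathit{Loss})$ with $\mathit{Init}\in I^n$ and $\mathit{Loss}\subseteq\{(j,i,t)\}$ (meaning the message from $j$ to $i$ in round $t$ is lost), consistent with at most $f$ crashes: there is a set $P$ of at most $f$ processes and a crash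 round $c_p$ for each $p\in P$ such that messages from processes not in $P$ are never lost, and for $p\in P$ messages from $p$ in rounds $t<c_p$ are never lost, all messages from $p$ in rounds $t>c_p$ are lost, and in round $c_p$ an arbitrary subset of $p$'s messages is lost. A process in $P$ is called crashed. Execution. Process $i$ starts in state $s_i^0=\mathit{Init}[i]$. In round $t=1,\dots,r$, every process broadcasts its current state; process $i$'s input vector is $x^t_i$ with $(x^t_i)_j=s_j^{t-1}$ if $(j,i,t)\notin\mathit{Loss}$ and $(x^t_i)_j=L$ otherwise; then $s_i^t=M(t,i,x_i^t)$. The final state of process $i$ is $s_i^r\in D$. Correctness. $C$ is a property of the scenario together with the final decision states; it depends only on $\mathit{Sc}$ and the final states (not on intermediate states). A state machine is correct if for every scenario consistent with the setting, its execution satisfies $C$. The setting is feasible if a correct state machine exists. A scenario $\mathit{Sc}$ leads to a definite decision if there is a vector $(d_1,\dots,d_n)\in D^n$ such that every correct state machine, executed on $\mathit{Sc}$, ends with process $i$ in state $d_i$ for all $i$. *)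

theory Defs
  imports Main
begin

(* Process IDs are 1..n, rounds 1..r.  Vectors indexed by process IDs are lists of
   length n; the entry of process i is at list position i - 1.
   States are elements of a type 's; the sets I, D, Q :: 's set are the initial,
   decision and intermediate states.  A received message is  's option, where
   None is the "lost message" symbol L (so L is automatically not a state).
   A state machine is a HOL function  M :: nat => nat => 's option list => 's
   (round, process ID, input vector); only its values on the meaningful domain
   are constrained. *)

type_synonym 's scenario = "'s list \<times> (nat \<times> nat \<times> nat) set"

type_synonym 's machine = "nat \<Rightarrow> nat \<Rightarrow> 's option list \<Rightarrow> 's"

definition valid_input :: "nat \<Rightarrow> 's set \<Rightarrow> 's set \<Rightarrow> 's option list \<Rightarrow> bool" where
  "valid_input n I Q x \<longleftrightarrow> length x = n \<and> (\<forall>v\<in>set x. v = None \<or> (\<exists>s\<in>I \<union> Q. v = Some s))"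

definition state_machine ::
  "nat \<Rightarrow> nat \<Rightarrow> 's set \<Rightarrow> 's set \<Rightarrow> 's set \<Rightarrow> 's machine \<Rightarrow> bool" where
  "state_machine n r I D Q M \<longleftrightarrow>
     (\<forall>t\<in>{1..r}. \<forall>i\<in>{1..n}. \<forall>x. valid_input n I Q x \<longrightarrow>
        M t i x \<in> (if t < r then Q else D))"

definition scenario :: "nat \<Rightarrow> nat \<Rightarrow> nat \<Rightarrow> 's set \<Rightarrow> 's scenario \<Rightarrow> bool" where
  "scenario n r f I Sc \<longleftrightarrow>
     (let Init = fst Sc; Loss = snd Sc in
      length Init = n \<and> set Init \<subseteq> I \<and>
      Loss \<subseteq> {1..n} \<times> {1..n} \<times> {1..r} \<and>
      (\<exists>(P::nat set) (c::nat \<Rightarrow> nat). P \<subseteq> {1..n} \<and> card P \<le> f \<and>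
         (\<forall>j i t. (j, i, t) \<in> Loss \<longrightarrow> j \<in> P \<and> c j \<le> t) \<and>
         (\<forall>j\<in>P. \<forall>i\<in>{1..n}. \<forall>t\<in>{1..r}. c j < t \<longrightarrow> (j, i, t) \<in> Loss)))"

(* input vector of process i in round t, given the state vector s after round t-1 *)
definition input_vec :: "nat \<Rightarrow> (nat \<times> nat \<times> nat) set \<Rightarrow> 's list \<Rightarrow> nat \<Rightarrow> nat \<Rightarrow> 's option list" where
  "input_vec n Loss s i t = map (\<lambda>j. if (j, i, t) \<in> Loss then None else Some (s ! (j - 1))) [1..<Suc n]"

fun exec :: "nat \<Rightarrow> 's machine \<Rightarrow> 's scenario \<Rightarrow> nat \<Rightarrow> 's list" where
  "exec n M Sc 0 = fst Sc"
| "exec n M Sc (Suc t) =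
     map (\<lambda>i. M (Suc t) i (input_vec n (snd Sc) (exec n M Sc t) i (Suc t))) [1..<Suc n]"

definition final_states :: "nat \<Rightarrow> nat \<Rightarrow> 's machine \<Rightarrow> 's scenario \<Rightarrow> 's list" where
  "final_states n r M Sc = exec n M Sc r"

definition correct ::
  "nat \<Rightarrow> nat \<Rightarrow> nat \<Rightarrow> 's set \<Rightarrow> 's set \<Rightarrow> 's set \<Rightarrow>
   ('s scenario \<Rightarrow> 's list \<Rightarrow> bool) \<Rightarrow> 's machine \<Rightarrow> bool" where
  "correct n r f I D Q C M \<longleftrightarrow> state_machine n r I D Q M \<and>
     (\<forall>Sc. scenario n r f I Sc \<longrightarrow> C Sc (final_states n r M Sc))"

definition feasible ::
  "nat \<Rightarrow> nat \<Rightarrow> nat \<Rightarrow> 's set \<Rightarrow> 's set \<Rightarrow> 's set \<Rightarrow>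
   ('s scenario \<Rightarrow> 's list \<Rightarrow> bool) \<Rightarrow> bool" where
  "feasible n r f I D Q C \<longleftrightarrow> (\<exists>M. correct n r f I D Q C M)"

definition definite_decision ::
  "nat \<Rightarrow> nat \<Rightarrow> nat \<Rightarrow> 's set \<Rightarrow> 's set \<Rightarrow> 's set \<Rightarrow>
   ('s scenario \<Rightarrow> 's list \<Rightarrow> bool) \<Rightarrow> 's scenario \<Rightarrow> 's list \<Rightarrow> bool" where
  "definite_decision n r f I D Q C Sc d \<longleftrightarrow>
     length d = n \<and> set d \<subseteq> D \<and>
     (\<forall>M. correct n r f I D Q C M \<longrightarrow> final_states n r M Sc = d)"

definition applied ::
  "nat \<Rightarrow> nat \<Rightarrow> 's machine \<Rightarrow> 's scenario \<Rightarrow> nat \<times> nat \<times> 's option list \<times> 's \<Rightarrow> bool" where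
  "applied n r M Sc tr \<longleftrightarrow>
     (case tr of (t, i, x, y) \<Rightarrow>
        t \<in> {1..r} \<and> i \<in> {1..n} \<and>
        x = input_vec n (snd Sc) (exec n M Sc (t - 1)) i t \<and> M t i x = y)"

end

theory Submission
  imports Defs
begin

definition sw :: "'a \<Rightarrow> 'a \<Rightarrow> 'a \<Rightarrow> 'a" where
  "sw a b x = (if x = a then b else if x = b then a else x)"

lemma sw_sw[simp]: "sw a b (sw a b x) = x"
  by (simp add: sw_def)

lemma sw_a[simp]: "sw a b a = b"
  by (simp add: sw_def)

lemma sw_Q: "a \<in> Q \<Longrightarrow> b \<in> Q \<Longrightarrow> x \<in> Q \<Longrightarrow> sw a b x \<in> Q"
  by (simp add: sw_def)

lemma sw_nQ: "a \<in> Q \<Longrightarrow> b \<in> Q \<Longrightarrow> x \<notin> Q \<Longrightarrow> sw a b x = x"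
  by (auto simp add: sw_def)

definition decode :: "(nat \<Rightarrow> nat \<Rightarrow> 's \<Rightarrow> 's) \<Rightarrow> nat \<Rightarrow> 's option list \<Rightarrow> 's option list" where
  "decode e t x = map (\<lambda>k. map_option (e t (Suc k)) (x ! k)) [0..<length x]"

definition rename :: "(nat \<Rightarrow> nat \<Rightarrow> 's \<Rightarrow> 's) \<Rightarrow> 's machine \<Rightarrow> 's machine" where
  "rename e M0 t i x = e t i (M0 t i (decode e (t - 1) x))"

lemma input_vec_len[simp]: "length (input_vec n L s i t) = n"
  by (simp add: input_vec_def)

lemma input_vec_nth: "k < n \<Longrightarrow> input_vec n L s i t ! k =
   (if (Suc k, i, t) \<in> L then None else Some (s ! k))"
  by (simp add: input_vec_def del: upt_Suc)

lemma rename_Suc: "rename e M0 (Suc t) i x = e (Suc t) i (M0 (Suc t) i (decode e t x))"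
  by (simp add: rename_def)

lemma nth_map_ids: "i \<in> {Suc 0..<Suc n} \<Longrightarrow> map g [Suc 0..<Suc n] ! (i - Suc 0) = g i"
  by (auto simp del: upt_Suc)

lemma exec_len: "length (fst Sc) = n \<Longrightarrow> length (exec n M Sc t) = n"
  by (cases t) auto

lemma exec_rename:
  assumes inv: "\<And>t i s. e t i (e t i s) = s" and e0: "\<And>i s. e 0 i s = s"
    and len: "length (fst Sc) = n"
  shows "exec n (rename e M0) Sc t = map (\<lambda>i. e t i (exec n M0 Sc t ! (i - 1))) [1..<Suc n]"
proof (induction t)
  case 0
  show ?case using len by (auto simp: e0 intro!: nth_equalityI simp del: upt_Suc)
next
  case (Suc t)
  have "decode e t (input_vec n (snd Sc) (exec n (rename e M0) Sc t) i (Suc t))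
        = input_vec n (snd Sc) (exec n M0 Sc t) i (Suc t)" for i
    unfolding Suc decode_def
    by (auto simp: input_vec_nth inv intro!: nth_equalityI simp del: upt_Suc)
  then show ?case by (simp add: rename_Suc nth_map_ids del: upt_Suc)
qed

lemma exec_in:
  assumes sm: "state_machine n r I D Q M" and sc: "scenario n r f I Sc"
  shows "t \<le> r \<Longrightarrow> k < n \<Longrightarrow> exec n M Sc t ! k \<in> (if t = 0 then I else if t < r then Q else D)"
proof (induction t arbitrary: k)
  case 0
  then show ?case using sc by (auto simp: scenario_def Let_def)
next
  case (Suc t)
  have len: "length (fst Sc) = n" using sc by (simp add: scenario_def Let_def)
  have el: "exec n M Sc t ! j \<in> I \<union> Q" if "j < n" for j
    using Suc.IH[of j] Suc.prems that by (auto split: if_splits)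
  have "valid_input n I Q (input_vec n (snd Sc) (exec n M Sc t) (Suc k) (Suc t))"
    unfolding valid_input_def
  proof (intro conjI ballI)
    fix v assume "v \<in> set (input_vec n (snd Sc) (exec n M Sc t) (Suc k) (Suc t))"
    then obtain j where "j < n" "v = input_vec n (snd Sc) (exec n M Sc t) (Suc k) (Suc t) ! j"
      by (auto simp: in_set_conv_nth)
    then show "v = None \<or> (\<exists>s\<in>I \<union> Q. v = Some s)" using el by (simp add: input_vec_nth)
  qed simp
  then have "M (Suc t) (Suc k) (input_vec n (snd Sc) (exec n M Sc t) (Suc k) (Suc t))
       \<in> (if Suc t < r then Q else D)"
    using sm Suc.prems unfolding state_machine_def by auto
  then show ?case using Suc.prems by (simp del: upt_Suc)
qed

theorem theorem2:
  fixes n r f :: nat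
    and I D Q :: "'s set"
    and C :: "'s scenario \<Rightarrow> 's list \<Rightarrow> bool"
    and Sc :: "'s scenario"
    and d :: "'s list"
    and M :: "'s machine"
    and T :: "(nat \<times> nat \<times> 's option list \<times> 's) set"
  assumes "finite I" and "finite D" and "finite Q"
    and "r \<ge> 2"
    and "feasible n r f I D Q C"
    and "scenario n r f I Sc"
    and "definite_decision n r f I D Q C Sc d"
    and "state_machine n r I D Q M"
    and "final_states n r M Sc = d"
    and "\<forall>tr\<in>T. applied n r M Sc tr"
    and "\<forall>a\<in>T. \<forall>b\<in>T. fst a = fst b \<and> fst (snd a) = fst (snd b) \<longrightarrow> a = b"
  shows "\<exists>M'. correct n r f I D Q C M' \<and>
           (\<forall>(t, i, x, y)\<in>T. M' t i x = y)"
proof -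
  note A = assms
  obtain M0 where M0: "correct n r f I D Q C M0" using A(5) unfolding feasible_def by blast
  have sm0: "state_machine n r I D Q M0" using M0 unfolding correct_def by blast
  define e where "e = (\<lambda>t i s. if 1 \<le> t \<and> t < r \<and> 1 \<le> i \<and> i \<le> n
     then sw (exec n M0 Sc t ! (i - 1)) (exec n M Sc t ! (i - 1)) s else s)"
  have inv: "\<And>t i s. e t i (e t i s) = s" by (simp add: e_def)
  have e0: "\<And>i s. e 0 i s = s" by (simp add: e_def)
  have er: "\<And>i s. e r i s = s" by (simp add: e_def)
  have eQ: "e t i s \<in> Q" if "s \<in> Q" for t i s
  proof -
    have "exec n M0 Sc t ! (i - 1) \<in> Q \<and> exec n M Sc t ! (i - 1) \<in> Q"
      if "1 \<le> t" "t < r" "1 \<le> i" "i \<le> n"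
      using exec_in[OF sm0 A(6), of t "i - 1"] exec_in[OF A(8) A(6), of t "i - 1"] that by auto
    then show ?thesis using \<open>s \<in> Q\<close> by (auto simp: e_def intro: sw_Q)
  qed
  have enQ: "e t i s = s" if "s \<notin> Q" for t i s
  proof -
    have "exec n M0 Sc t ! (i - 1) \<in> Q \<and> exec n M Sc t ! (i - 1) \<in> Q"
      if "1 \<le> t" "t < r" "1 \<le> i" "i \<le> n"
      using exec_in[OF sm0 A(6), of t "i - 1"] exec_in[OF A(8) A(6), of t "i - 1"] that by auto
    then show ?thesis using \<open>s \<notin> Q\<close> by (auto simp: e_def intro: sw_nQ)
  qed
  have eIQ: "e t i s \<in> I \<union> Q" if "s \<in> I \<union> Q" for t i s
    using eQ enQ that by (cases "s \<in> Q") auto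
  define M' where "M' = rename e M0"
  have exM': "exec n M' Sc' t = map (\<lambda>i. e t i (exec n M0 Sc' t ! (i - 1))) [1..<Suc n]"
    if "length (fst Sc') = n" for Sc' t
    unfolding M'_def using exec_rename[of e, OF inv e0 that] .
  have fin: "final_states n r M' Sc' = final_states n r M0 Sc'" if "length (fst Sc') = n" for Sc'
    unfolding final_states_def exM'[OF that] er
    using exec_len[OF that, of M0 r]
    by (auto intro!: nth_equalityI simp del: upt_Suc)
  have smM': "state_machine n r I D Q M'"
    unfolding state_machine_def
  proof (intro ballI allI impI)
    fix t i x assume t: "t \<in> {1..r}" and i: "i \<in> {1..n}" and x: "valid_input n I Q x"
    have "valid_input n I Q (decode e (t - 1) x)"
      unfolding valid_input_def
    proof (intro conjI ballI)
      show "length (decode e (t - 1) x) = n" using x by (simp add: decode_def valid_input_def)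
      fix v assume "v \<in> set (decode e (t - 1) x)"
      then obtain k where k: "k < length x" "v = map_option (e (t - 1) (Suc k)) (x ! k)"
        by (auto simp: decode_def)
      have "x ! k = None \<or> (\<exists>s\<in>I \<union> Q. x ! k = Some s)"
        using x k(1) nth_mem unfolding valid_input_def by blast
      then show "v = None \<or> (\<exists>s\<in>I \<union> Q. v = Some s)" using k(2) eIQ by auto
    qed
    then have "M0 t i (decode e (t - 1) x) \<in> (if t < r then Q else D)"
      using sm0 t i unfolding state_machine_def by blast
    then show "M' t i x \<in> (if t < r then Q else D)"
      using eQ er t by (auto simp: M'_def rename_def split: if_splits)
  qed
  have corr: "correct n r f I D Q C M'"
    unfolding correct_def
  proof (intro conjI allI impI smM')
    fix Sc' assume sc: "scenario n r f I Sc'"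
    then have "length (fst Sc') = n" by (simp add: scenario_def Let_def)
    then have "final_states n r M' Sc' = final_states n r M0 Sc'" by (rule fin)
    moreover have "C Sc' (final_states n r M0 Sc')" using M0 sc unfolding correct_def by blast
    ultimately show "C Sc' (final_states n r M' Sc')" by simp
  qed
  have len: "length (fst Sc) = n" using A(6) by (simp add: scenario_def Let_def)
  have same: "exec n M' Sc t = exec n M Sc t" if "t \<le> r" for t
  proof (cases "t = 0 \<or> t = r")
    case True
    then show ?thesis
    proof
      assume "t = 0" then show ?thesis by simp
    next
      assume "t = r"
      have "final_states n r M' Sc = d"
        using A(7) corr unfolding definite_decision_def by blast
      then show ?thesis using \<open>t = r\<close> A(9) unfolding final_states_def by simp
    qed
  next
    case False
    then have t: "1 \<le> t" "t < r" using that by auto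
    show ?thesis unfolding exM'[OF len]
      using exec_len[OF len, of M t] t
      by (auto simp: e_def intro!: nth_equalityI simp del: upt_Suc)
  qed
  have "M' t i x = y" if "(t, i, x, y) \<in> T" for t i x y
  proof -
    have ap: "t \<in> {1..r}" "i \<in> {1..n}" "x = input_vec n (snd Sc) (exec n M Sc (t - 1)) i t"
      "M t i x = y" using A(10) that unfolding applied_def by auto
    obtain t' where t': "t = Suc t'" using ap(1) by (cases t) auto
    have "exec n M' Sc t ! (i - 1) = exec n M Sc t ! (i - 1)" using same ap(1) by simp
    moreover have "exec n M' Sc t ! (i - 1) = M' t i x"
      using ap(2,3) same[of t'] t' ap(1) by (auto simp del: upt_Suc)
    moreover have "exec n M Sc t ! (i - 1) = M t i x"
      using ap(2,3) t' by (auto simp del: upt_Suc)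
    ultimately show ?thesis using ap(4) by simp
  qed
  then show ?thesis using corr by blast
qed

end
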